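(* Let $X$ be a translation surface and let $\mathcal{R}$ be its set of rigid spines (a subset of the set of saddle connections of $X$). Suppose that the set of holonomy vectors in $\mathbb{R}^2$ of the elements of $\mathcal{R}$ (the rigid spines developed into the plane) is discrete, and that it contains at least two linearly independent vectors. Then the Veech group of $X$ is discrete.
   Context: A saddle connection is a straight-line segment from a singularity to a singularity with no singularity in its interior; its holonomy vector is the vector in $\mathbb{R}^2$ obtained by developing it into the plane. A cylinder is a closed subset of the surface whose interior is foliated by homotopic closed straight-line trajectories and whose boundary consists of saddle connections. A cylinder decomposition is a collection of (possibly infinitely many) cylinders whose closed trajectories have a common direction, meeting pairwise at most along their boundaries, such that the closure of their union is the whole surface. A spine is a line segment in the closure of the union that is not contained in any of the cylinders; a rigid spine is a spine consisting of a single saddle connection. The Veech group of $X$ is the group of derivatives (in $GL_2(\mathbb{R})$) of affine diffeomorphisms of $X$, i.e. diffeomorphisms that are affine in translation charts. *)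

theory Defs
  imports "HOL-Analysis.Analysis"
begin

text \<open>
Model.  A translation surface is given through its metric completion: a type 'a with a
metric (the flat metric), a closed set Sig of singularities (the points of the metric
completion that are not on the surface), the surface itself X = - Sig, and an atlas A of
translation charts (U, phi) on X.  We require that UNIV :: 'a is complete, X is dense
(so UNIV is the metric completion of X), X is connected, the charts are homeomorphisms
onto open subsets of the plane with transition maps that are locally translations, and
the metric on X is the flat metric: the infimum of lengths of polygonal chains made of
straight chart segments.
\<close>

type_synonym 'a chart = "'a set \<times> ('a \<Rightarrow> real^2)"

text \<open>Polygonal chains x = ps!0, ..., ps!n = y together with charts cs!i such that
ps!i and ps!(i+1) lie in the domain of cs!i and the straight segment between their images
lies in the chart image; its flat length is the sum of the Euclidean lengths of these
segments.\<close>

definition flat_chain :: "'a chart set \<Rightarrow> 'a \<Rightarrow> 'a \<Rightarrow> 'a list \<Rightarrow> 'a chart list \<Rightarrow> bool" where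
  "flat_chain A x y ps cs \<longleftrightarrow> ps \<noteq> [] \<and> hd ps = x \<and> last ps = y \<and>
     length cs = length ps - 1 \<and>
     (\<forall>i < length cs. cs ! i \<in> A \<and> ps ! i \<in> fst (cs ! i) \<and> ps ! Suc i \<in> fst (cs ! i) \<and>
        closed_segment (snd (cs ! i) (ps ! i)) (snd (cs ! i) (ps ! Suc i))
          \<subseteq> snd (cs ! i) ` fst (cs ! i))"

definition chain_length :: "'a list \<Rightarrow> 'a chart list \<Rightarrow> real" where
  "chain_length ps cs =
     (\<Sum>i<length cs. norm (snd (cs ! i) (ps ! Suc i) - snd (cs ! i) (ps ! i)))"

definition translation_surface :: "'a::metric_space set \<Rightarrow> 'a chart set \<Rightarrow> bool" where
  "translation_surface Sig A \<longleftrightarrow>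
     complete (UNIV :: 'a set) \<and> closed Sig \<and> closure (- Sig) = UNIV \<and> connected (- Sig) \<and>
     (\<Union>(fst ` A) = - Sig) \<and>
     (\<forall>(U, phi) \<in> A. open U \<and> U \<subseteq> - Sig \<and> inj_on phi U \<and> open (phi ` U) \<and>
        continuous_on U phi \<and> continuous_on (phi ` U) (inv_into U phi)) \<and>
     (\<forall>(U, phi) \<in> A. \<forall>(V, psi) \<in> A. \<forall>p \<in> U \<inter> V.
        \<exists>W c. open W \<and> p \<in> W \<and> W \<subseteq> U \<inter> V \<and> (\<forall>q \<in> W. psi q = phi q + c)) \<and>
     (\<forall>x \<in> - Sig. \<forall>y \<in> - Sig.
        dist x y = Inf {chain_length ps cs | ps cs. flat_chain A x y ps cs})"

text \<open>Saddle connections, parametrised on [0,1] with constant developed velocity v;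
v is the holonomy vector.\<close>

definition saddle_connection ::
  "'a::metric_space set \<Rightarrow> 'a chart set \<Rightarrow> (real \<Rightarrow> 'a) \<Rightarrow> real^2 \<Rightarrow> bool" where
  "saddle_connection Sig A \<gamma> v \<longleftrightarrow>
     v \<noteq> 0 \<and> continuous_on {0..1} \<gamma> \<and> \<gamma> 0 \<in> Sig \<and> \<gamma> 1 \<in> Sig \<and>
     \<gamma> ` {0<..<1} \<subseteq> - Sig \<and>
     (\<forall>t \<in> {0<..<1}. \<forall>(U, phi) \<in> A. \<gamma> t \<in> U \<longrightarrow>
        (\<exists>e>0. \<forall>s. \<bar>s - t\<bar> < e \<longrightarrow>
           \<gamma> s \<in> U \<and> phi (\<gamma> s) = phi (\<gamma> t) + (s - t) *\<^sub>R v))"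

text \<open>A cylinder with core holonomy c: its interior is the injective image (modulo
s ~ s+1) of the open strip R x (0,1) under a map F which in every chart develops as
(s,t) |-> s c + t w + const, with c, w linearly independent; so F(., t) are homotopic
closed straight trajectories with holonomy c.  The cylinder is the closure of its interior
and its boundary is a union of saddle connections.\<close>

definition cylinder ::
  "'a::metric_space set \<Rightarrow> 'a chart set \<Rightarrow> 'a set \<Rightarrow> real^2 \<Rightarrow> bool" where
  "cylinder Sig A C c \<longleftrightarrow>
     closed C \<and> C = closure (interior C) \<and>
     (\<exists>w F. independent {c, w} \<and> c \<noteq> w \<and>
        interior C = {F s t | s t. 0 < t \<and> t < 1} \<and>
        (\<forall>s t. 0 < t \<and> t < 1 \<longrightarrow> F s t \<in> - Sig \<and> F (s + 1) t = F s t) \<and>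
        (\<forall>s t s' t'. 0 < t \<and> t < 1 \<and> 0 < t' \<and> t' < 1 \<and> F s t = F s' t' \<longrightarrow>
            t = t' \<and> s - s' \<in> \<int>) \<and>
        (\<forall>s t. 0 < t \<and> t < 1 \<longrightarrow> (\<forall>(U, phi) \<in> A. F s t \<in> U \<longrightarrow>
            (\<exists>e>0. \<exists>k. \<forall>s' t'. \<bar>s' - s\<bar> < e \<and> \<bar>t' - t\<bar> < e \<longrightarrow>
               F s' t' \<in> U \<and> phi (F s' t') = s' *\<^sub>R c + t' *\<^sub>R w + k)))) \<and>
     frontier C = \<Union>{\<gamma> ` {0..1} | \<gamma> v. saddle_connection Sig A \<gamma> v \<and> \<gamma> ` {0..1} \<subseteq> frontier C}"

text \<open>Cylinder decomposition in direction d.\<close>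

definition cylinder_decomposition ::
  "'a::metric_space set \<Rightarrow> 'a chart set \<Rightarrow> 'a set set \<Rightarrow> real^2 \<Rightarrow> bool" where
  "cylinder_decomposition Sig A \<C> d \<longleftrightarrow>
     d \<noteq> 0 \<and>
     (\<forall>C \<in> \<C>. \<exists>c. cylinder Sig A C c \<and> (\<exists>r::real. c = r *\<^sub>R d)) \<and>
     (\<forall>C \<in> \<C>. \<forall>C' \<in> \<C>. C \<noteq> C' \<longrightarrow> C \<inter> C' \<subseteq> frontier C \<inter> frontier C') \<and>
     closure (\<Union>\<C>) = UNIV"

text \<open>Rigid spine: a saddle connection (parallel to the decomposition direction) lying in the
closure of the union of the cylinders of some cylinder decomposition but not contained in
any of its cylinders.\<close>

definition rigid_spine ::
  "'a::metric_space set \<Rightarrow> 'a chart set \<Rightarrow> (real \<Rightarrow> 'a) \<Rightarrow> real^2 \<Rightarrow> bool" where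
  "rigid_spine Sig A \<gamma> v \<longleftrightarrow>
     saddle_connection Sig A \<gamma> v \<and>
     (\<exists>\<C> d. cylinder_decomposition Sig A \<C> d \<and> (\<exists>r::real. v = r *\<^sub>R d) \<and>
        \<gamma> ` {0..1} \<subseteq> closure (\<Union>\<C>) \<and> (\<forall>C \<in> \<C>. \<not> \<gamma> ` {0..1} \<subseteq> C))"

definition rigid_spine_holonomies :: "'a::metric_space set \<Rightarrow> 'a chart set \<Rightarrow> (real^2) set" where
  "rigid_spine_holonomies Sig A = {v. \<exists>\<gamma>. rigid_spine Sig A \<gamma> v}"

text \<open>Affine diffeomorphisms of X = - Sig with derivative D, and the Veech group.\<close>

definition affine_diffeo ::
  "'a::metric_space set \<Rightarrow> 'a chart set \<Rightarrow> ('a \<Rightarrow> 'a) \<Rightarrow> real^2^2 \<Rightarrow> bool" where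
  "affine_diffeo Sig A f D \<longleftrightarrow>
     bij_betw f (- Sig) (- Sig) \<and> continuous_on (- Sig) f \<and>
     continuous_on (- Sig) (inv_into (- Sig) f) \<and>
     (\<forall>p \<in> - Sig. \<forall>(U, phi) \<in> A. \<forall>(V, psi) \<in> A. p \<in> U \<and> f p \<in> V \<longrightarrow>
        (\<exists>W. open W \<and> p \<in> W \<and> W \<subseteq> U \<and> f ` W \<subseteq> V \<and>
           (\<forall>q \<in> W. psi (f q) = D *v phi q + (psi (f p) - D *v phi p))))"

definition veech_group :: "'a::metric_space set \<Rightarrow> 'a chart set \<Rightarrow> (real^2^2) set" where
  "veech_group Sig A = {D. \<exists>f. affine_diffeo Sig A f D}"

text \<open>Discreteness.  A subset of the plane is discrete if it has no accumulation point;
a subset of GL_2(R) is discrete if each of its points is isolated in it.\<close>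

definition discrete_set :: "'b::metric_space set \<Rightarrow> bool" where
  "discrete_set S \<longleftrightarrow> (\<forall>x. \<not> x islimpt S)"

definition discrete_subset :: "'b::metric_space set \<Rightarrow> bool" where
  "discrete_subset S \<longleftrightarrow> (\<forall>x \<in> S. \<exists>e>0. \<forall>y \<in> S. dist y x < e \<longrightarrow> y = x)"

end

theory Submission
  imports Defs
begin

locale TS =
  fixes Sig :: "'a::metric_space set" and A :: "'a chart set"
  assumes ts: "translation_surface Sig A"
begin

lemma closedSig: "closed Sig" using ts unfolding translation_surface_def by auto
lemma openX: "open (- Sig)" using closedSig by auto
lemma completeU: "complete (UNIV :: 'a set)" using ts unfolding translation_surface_def by auto
lemma denseX: "closure (- Sig) = UNIV" using ts unfolding translation_surface_def by auto
lemma Xne: "- Sig \<noteq> {}" using denseX by auto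

lemma chart:
  assumes "(U, phi) \<in> A"
  shows "open U" "U \<subseteq> - Sig" "inj_on phi U" "open (phi ` U)" "continuous_on U phi"
    "continuous_on (phi ` U) (inv_into U phi)"
proof -
  have h: "\<forall>(U, phi) \<in> A. open U \<and> U \<subseteq> - Sig \<and> inj_on phi U \<and> open (phi ` U) \<and>
        continuous_on U phi \<and> continuous_on (phi ` U) (inv_into U phi)"
    using ts unfolding translation_surface_def by (elim conjE) assumption
  then have "open U \<and> U \<subseteq> - Sig \<and> inj_on phi U \<and> open (phi ` U) \<and>
        continuous_on U phi \<and> continuous_on (phi ` U) (inv_into U phi)"
    using bspec[OF h assms] by simp
  then show "open U" "U \<subseteq> - Sig" "inj_on phi U" "open (phi ` U)" "continuous_on U phi"
    "continuous_on (phi ` U) (inv_into U phi)" by auto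
qed

lemma cover:
  assumes "x \<in> - Sig"
  obtains U phi where "(U, phi) \<in> A" "x \<in> U"
proof -
  have "\<Union>(fst ` A) = - Sig" using ts unfolding translation_surface_def by auto
  with assms obtain c where "c \<in> A" "x \<in> fst c" by blast
  then show ?thesis using that[of "fst c" "snd c"] by auto
qed

lemma dist_eq:
  assumes "x \<in> - Sig" "y \<in> - Sig"
  shows "dist x y = Inf {chain_length ps cs | ps cs. flat_chain A x y ps cs}"
  using ts assms unfolding translation_surface_def by auto

lemma open_image:
  assumes "(U, phi) \<in> A" "open W" "W \<subseteq> U"
  shows "open (phi ` W)"
proof -
  have "phi ` W = inv_into U phi -` W \<inter> phi ` U"
  proof
    show "phi ` W \<subseteq> inv_into U phi -` W \<inter> phi ` U"
      using assms(3) chart(3)[OF assms(1)] by (auto simp: inv_into_f_f subsetD)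
    show "inv_into U phi -` W \<inter> phi ` U \<subseteq> phi ` W"
      using chart(3)[OF assms(1)] by (auto simp: inv_into_f_f)
  qed
  moreover have "open (inv_into U phi -` W \<inter> phi ` U)"
    using iffD1[OF continuous_on_open_vimage[OF chart(4)[OF assms(1)]] chart(6)[OF assms(1)]] assms(2) by blast
  ultimately show ?thesis by simp
qed

end

locale AD = TS +
  fixes f :: "'a::metric_space \<Rightarrow> 'a" and D :: "real^2^2"
  assumes ad: "affine_diffeo Sig A f D"
begin

lemma bij: "bij_betw f (- Sig) (- Sig)" using ad unfolding affine_diffeo_def by auto
lemma contf: "continuous_on (- Sig) f" using ad unfolding affine_diffeo_def by auto
lemma contfi: "continuous_on (- Sig) (inv_into (- Sig) f)" using ad unfolding affine_diffeo_def by auto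
lemma fX: "x \<in> - Sig \<Longrightarrow> f x \<in> - Sig" using bij bij_betwE by blast

lemma loc:
  assumes "p \<in> - Sig" "(U, phi) \<in> A" "(V, psi) \<in> A" "p \<in> U" "f p \<in> V"
  obtains W where "open W" "p \<in> W" "W \<subseteq> U" "f ` W \<subseteq> V"
    "\<And>q. q \<in> W \<Longrightarrow> psi (f q) = D *v phi q + (psi (f p) - D *v phi p)"
proof -
  have h: "\<forall>p \<in> - Sig. \<forall>(U, phi) \<in> A. \<forall>(V, psi) \<in> A. p \<in> U \<and> f p \<in> V \<longrightarrow>
        (\<exists>W. open W \<and> p \<in> W \<and> W \<subseteq> U \<and> f ` W \<subseteq> V \<and>
           (\<forall>q \<in> W. psi (f q) = D *v phi q + (psi (f p) - D *v phi p)))"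
    using ad unfolding affine_diffeo_def by (elim conjE) assumption
  have h2: "\<forall>(V, psi) \<in> A. p \<in> U \<and> f p \<in> V \<longrightarrow>
        (\<exists>W. open W \<and> p \<in> W \<and> W \<subseteq> U \<and> f ` W \<subseteq> V \<and>
           (\<forall>q \<in> W. psi (f q) = D *v phi q + (psi (f p) - D *v phi p)))"
    using bspec[OF bspec[OF h assms(1)] assms(2)] by simp
  have "\<exists>W. open W \<and> p \<in> W \<and> W \<subseteq> U \<and> f ` W \<subseteq> V \<and>
           (\<forall>q \<in> W. psi (f q) = D *v phi q + (psi (f p) - D *v phi p))"
    using bspec[OF h2 assms(3)] assms(4,5) by simp
  then show ?thesis using that by blast
qed

lemma D_inj:
  assumes "D *v z = 0" shows "z = 0"
proof (rule ccontr)
  assume z: "z \<noteq> 0"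
  obtain p where p: "p \<in> - Sig" using Xne by auto
  obtain U phi where U: "(U, phi) \<in> A" "p \<in> U" using cover[OF p] by metis
  obtain V psi where V: "(V, psi) \<in> A" "f p \<in> V" using cover[OF fX[OF p]] by metis
  obtain W where W: "open W" "p \<in> W" "W \<subseteq> U" "f ` W \<subseteq> V"
    "\<And>q. q \<in> W \<Longrightarrow> psi (f q) = D *v phi q + (psi (f p) - D *v phi p)"
    using loc[OF p U(1) V(1) U(2) V(2)] by metis
  have "open (phi ` W)" using open_image[OF U(1) W(1,3)] .
  moreover have "phi p \<in> phi ` W" using W(2) by auto
  ultimately obtain r where r: "r > 0" "ball (phi p) r \<subseteq> phi ` W"
    using open_contains_ball by blast
  define x2 where "x2 = phi p + (r / (2 * norm z)) *\<^sub>R z"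
  have "dist (phi p) x2 = r / 2" using z r unfolding x2_def by (simp add: dist_norm)
  then have "x2 \<in> ball (phi p) r" using r by simp
  then obtain q where q: "q \<in> W" "phi q = x2" using r by auto
  have "D *v x2 = D *v phi p"
    unfolding x2_def by (simp add: matrix_vector_right_distrib matrix_vector_mult_scaleR assms)
  then have "psi (f q) = psi (f p)" using W(5)[OF q(1)] q(2) by simp
  moreover have "f q \<in> V" using W(4) q(1) by auto
  ultimately have "f q = f p" using chart(3)[OF V(1)] V(2) by (meson inj_onD)
  moreover have "q \<in> - Sig" using q(1) W(3) chart(2)[OF U(1)] by auto
  ultimately have "q = p" using bij p by (meson bij_betw_def inj_onD)
  then have "x2 = phi p" using q by simp
  then have "(r / (2 * norm z)) *\<^sub>R z = 0" unfolding x2_def by simp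
  then show False using z r by simp
qed

lemma D_inv: obtains Di where "Di ** D = mat 1" "D ** Di = mat 1"
proof -
  have "\<exists>B. B ** D = mat 1" unfolding matrix_left_invertible_ker using D_inj by blast
  then obtain B where "B ** D = mat 1" by blast
  moreover then have "D ** B = mat 1" using matrix_left_right_inverse by blast
  ultimately show ?thesis using that by blast
qed


abbreviation "g \<equiv> inv_into (- Sig) f"

lemma f_g: "y \<in> - Sig \<Longrightarrow> f (g y) = y"
  using bij by (simp add: bij_betw_def f_inv_into_f)
lemma g_f: "x \<in> - Sig \<Longrightarrow> g (f x) = x"
  using bij by (simp add: bij_betw_def inv_into_f_f)
lemma gX: "y \<in> - Sig \<Longrightarrow> g y \<in> - Sig"
  using bij by (meson bij_betwE bij_betw_inv_into)

lemma inv_affine: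
  assumes Di: "Di ** D = mat 1"
  shows "affine_diffeo Sig A g Di"
proof -
  have b: "bij_betw g (- Sig) (- Sig)" using bij_betw_inv_into[OF bij] .
  have c2: "continuous_on (- Sig) (inv_into (- Sig) g)"
  proof (rule continuous_on_eq[OF contf])
    fix x assume "x \<in> - Sig" then show "f x = inv_into (- Sig) g x"
      using inv_into_inv_into_eq[OF bij] by simp
  qed
  have key: "\<exists>W. open W \<and> p \<in> W \<and> W \<subseteq> U \<and> g ` W \<subseteq> V \<and>
           (\<forall>y \<in> W. psi (g y) = Di *v phi y + (psi (g p) - Di *v phi p))"
    if p: "p \<in> - Sig" and U: "(U, phi) \<in> A" and V: "(V, psi) \<in> A" and pU: "p \<in> U" and gV: "g p \<in> V"
    for p U phi V psi
  proof -
    define q where "q = g p"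
    have q: "q \<in> - Sig" "f q = p" using gX[OF p] f_g[OF p] unfolding q_def by auto
    obtain W where W: "open W" "q \<in> W" "W \<subseteq> V" "f ` W \<subseteq> U"
      "\<And>x. x \<in> W \<Longrightarrow> phi (f x) = D *v psi x + (phi (f q) - D *v psi q)"
      using loc[OF q(1) V U] gV pU q unfolding q_def by metis
    define W' where "W' = g -` W \<inter> - Sig"
    have oW': "open W'"
      unfolding W'_def using iffD1[OF continuous_on_open_vimage[OF openX] contfi] W(1) by blast
    have pW': "p \<in> W'" unfolding W'_def using W(2) p q_def by auto
    have sub: "W' \<subseteq> U"
    proof
      fix y assume "y \<in> W'"
      then have "g y \<in> W" "y \<in> - Sig" unfolding W'_def by auto
      then show "y \<in> U" using W(4) f_g by (metis image_subset_iff)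
    qed
    have img: "g ` W' \<subseteq> V" using W(3) unfolding W'_def by auto
    have eq: "psi (g y) = Di *v phi y + (psi (g p) - Di *v phi p)" if "y \<in> W'" for y
    proof -
      have y: "g y \<in> W" "y \<in> - Sig" using that unfolding W'_def by auto
      have "phi y = D *v psi (g y) + (phi p - D *v psi q)"
        using W(5)[OF y(1)] f_g[OF y(2)] q(2) by simp
      then have "Di *v phi y = Di *v (D *v psi (g y)) + (Di *v phi p - Di *v (D *v psi q))"
        by (simp add: matrix_vector_right_distrib matrix_vector_mult_diff_distrib)
      also have "\<dots> = psi (g y) + (Di *v phi p - psi q)"
        by (simp add: matrix_vector_mul_assoc Di)
      finally show ?thesis unfolding q_def by (simp add: algebra_simps)
    qed
    show ?thesis using oW' pW' sub img eq by blast
  qed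
  have loc': "\<forall>p \<in> - Sig. \<forall>(U, phi) \<in> A. \<forall>(V, psi) \<in> A. p \<in> U \<and> g p \<in> V \<longrightarrow>
        (\<exists>W. open W \<and> p \<in> W \<and> W \<subseteq> U \<and> g ` W \<subseteq> V \<and>
           (\<forall>q \<in> W. psi (g q) = Di *v phi q + (psi (g p) - Di *v phi p)))"
  proof (intro ballI)
    fix p c1 c2 assume "p \<in> - Sig" "c1 \<in> A" "c2 \<in> A"
    then show "case c1 of (U, phi) \<Rightarrow> \<forall>(V, psi) \<in> A. p \<in> U \<and> g p \<in> V \<longrightarrow>
        (\<exists>W. open W \<and> p \<in> W \<and> W \<subseteq> U \<and> g ` W \<subseteq> V \<and>
           (\<forall>q \<in> W. psi (g q) = Di *v phi q + (psi (g p) - Di *v phi p)))"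
      using key by (cases c1) auto
  qed
  show ?thesis unfolding affine_diffeo_def using b contfi c2 loc' by blast
qed

end

lemma flat_chain_Nil: "flat_chain A x y ps [] \<longleftrightarrow> ps = [x] \<and> x = y"
  unfolding flat_chain_def by (cases ps) auto

lemma flat_chain_Cons:
  "flat_chain A x y ps (c # cs) \<longleftrightarrow> (\<exists>p ps'. ps = x # p # ps' \<and> c \<in> A \<and> x \<in> fst c \<and> p \<in> fst c \<and>
     closed_segment (snd c x) (snd c p) \<subseteq> snd c ` fst c \<and> flat_chain A p y (p # ps') cs)"
proof
  assume h: "flat_chain A x y ps (c # cs)"
  then obtain p ps' where ps: "ps = x # p # ps'"
    unfolding flat_chain_def by (cases ps; cases "tl ps") auto
  have a: "c \<in> A \<and> x \<in> fst c \<and> p \<in> fst c \<and> closed_segment (snd c x) (snd c p) \<subseteq> snd c ` fst c"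
  proof -
    have "\<forall>i<length (c # cs). (c # cs) ! i \<in> A \<and> ps ! i \<in> fst ((c # cs) ! i) \<and> ps ! Suc i \<in> fst ((c # cs) ! i) \<and>
        closed_segment (snd ((c # cs) ! i) (ps ! i)) (snd ((c # cs) ! i) (ps ! Suc i))
          \<subseteq> snd ((c # cs) ! i) ` fst ((c # cs) ! i)" using h unfolding flat_chain_def by blast
    from this[rule_format, of 0] show ?thesis unfolding ps by simp
  qed
  have b: "flat_chain A p y (p # ps') cs"
  proof -
    have all: "\<forall>i<length (c # cs). (c # cs) ! i \<in> A \<and> ps ! i \<in> fst ((c # cs) ! i) \<and> ps ! Suc i \<in> fst ((c # cs) ! i) \<and>
        closed_segment (snd ((c # cs) ! i) (ps ! i)) (snd ((c # cs) ! i) (ps ! Suc i))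
          \<subseteq> snd ((c # cs) ! i) ` fst ((c # cs) ! i)" using h unfolding flat_chain_def by blast
    have P: "\<forall>i<length cs. cs ! i \<in> A \<and> (p # ps') ! i \<in> fst (cs ! i) \<and>
          (p # ps') ! Suc i \<in> fst (cs ! i) \<and>
          closed_segment (snd (cs ! i) ((p # ps') ! i)) (snd (cs ! i) ((p # ps') ! Suc i))
          \<subseteq> snd (cs ! i) ` fst (cs ! i)"
    proof (intro allI impI)
      fix i assume "i < length cs"
      from all[rule_format, of "Suc i"] this show "cs ! i \<in> A \<and> (p # ps') ! i \<in> fst (cs ! i) \<and>
          (p # ps') ! Suc i \<in> fst (cs ! i) \<and>
          closed_segment (snd (cs ! i) ((p # ps') ! i)) (snd (cs ! i) ((p # ps') ! Suc i))
          \<subseteq> snd (cs ! i) ` fst (cs ! i)" unfolding ps by simp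
    qed
    have "length cs = length (p # ps') - 1" "last (p # ps') = y"
      using h unfolding flat_chain_def ps by auto
    then show ?thesis using P unfolding flat_chain_def by simp
  qed
  show "\<exists>p ps'. ps = x # p # ps' \<and> c \<in> A \<and> x \<in> fst c \<and> p \<in> fst c \<and>
     closed_segment (snd c x) (snd c p) \<subseteq> snd c ` fst c \<and> flat_chain A p y (p # ps') cs"
    using ps a b by blast
next
  assume "\<exists>p ps'. ps = x # p # ps' \<and> c \<in> A \<and> x \<in> fst c \<and> p \<in> fst c \<and>
     closed_segment (snd c x) (snd c p) \<subseteq> snd c ` fst c \<and> flat_chain A p y (p # ps') cs"
  then obtain p ps' where h: "ps = x # p # ps'" "c \<in> A" "x \<in> fst c" "p \<in> fst c"
     "closed_segment (snd c x) (snd c p) \<subseteq> snd c ` fst c" "flat_chain A p y (p # ps') cs" by blast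
  have P: "\<forall>i<length (c # cs). (c # cs) ! i \<in> A \<and> (x # p # ps') ! i \<in> fst ((c # cs) ! i) \<and>
         (x # p # ps') ! Suc i \<in> fst ((c # cs) ! i) \<and>
         closed_segment (snd ((c # cs) ! i) ((x # p # ps') ! i))
          (snd ((c # cs) ! i) ((x # p # ps') ! Suc i)) \<subseteq> snd ((c # cs) ! i) ` fst ((c # cs) ! i)"
  proof (intro allI impI)
    fix i assume i: "i < length (c # cs)"
    show "(c # cs) ! i \<in> A \<and> (x # p # ps') ! i \<in> fst ((c # cs) ! i) \<and>
         (x # p # ps') ! Suc i \<in> fst ((c # cs) ! i) \<and>
         closed_segment (snd ((c # cs) ! i) ((x # p # ps') ! i))
          (snd ((c # cs) ! i) ((x # p # ps') ! Suc i)) \<subseteq> snd ((c # cs) ! i) ` fst ((c # cs) ! i)"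
    proof (cases i)
      case 0 then show ?thesis using h by simp
    next
      case (Suc j)
      then have "j < length cs" using i by simp
      then show ?thesis using h(6) unfolding flat_chain_def Suc by simp
    qed
  qed
  have "last (x # p # ps') = y" "length (c # cs) = length (x # p # ps') - 1"
    using h(6) unfolding flat_chain_def by simp_all
  then show "flat_chain A x y ps (c # cs)"
    unfolding flat_chain_def h(1) using P by simp
qed

lemma chain_length_Nil: "chain_length ps [] = 0"
  unfolding chain_length_def by simp

lemma chain_length_Cons:
  "chain_length (x # p # ps) (c # cs) = norm (snd c p - snd c x) + chain_length (p # ps) cs"
  unfolding chain_length_def length_Cons sum.lessThan_Suc_shift by simp

lemma chain_length_nonneg: "chain_length ps cs \<ge> 0"
  unfolding chain_length_def by (simp add: sum_nonneg)

lemma chain_concat: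
  assumes "flat_chain A x y ps cs" "flat_chain A y z qs ds"
  shows "flat_chain A x z (ps @ tl qs) (cs @ ds) \<and>
         chain_length (ps @ tl qs) (cs @ ds) = chain_length ps cs + chain_length qs ds"
  using assms
proof (induction cs arbitrary: x ps)
  case Nil
  then have "ps = [x]" "x = y" by (auto simp: flat_chain_Nil)
  moreover have "qs = y # tl qs" using Nil(2) unfolding flat_chain_def by (cases qs) auto
  ultimately show ?case using Nil(2) by (simp add: chain_length_Nil)
next
  case (Cons c cs)
  from Cons.prems(1) obtain p ps' where h: "ps = x # p # ps'" "c \<in> A" "x \<in> fst c" "p \<in> fst c"
     "closed_segment (snd c x) (snd c p) \<subseteq> snd c ` fst c" "flat_chain A p y (p # ps') cs"
    unfolding flat_chain_Cons by blast
  have IH: "flat_chain A p z ((p # ps') @ tl qs) (cs @ ds) \<and>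
         chain_length ((p # ps') @ tl qs) (cs @ ds) = chain_length (p # ps') cs + chain_length qs ds"
    using Cons.IH[OF h(6) Cons.prems(2)] .
  have "flat_chain A x z (ps @ tl qs) ((c # cs) @ ds)"
    unfolding h(1) using h IH by (simp add: flat_chain_Cons)
  moreover have "chain_length (ps @ tl qs) ((c # cs) @ ds) = chain_length ps (c # cs) + chain_length qs ds"
    unfolding h(1) using IH by (simp add: chain_length_Cons)
  ultimately show ?case by simp
qed


lemma seg_affine:
  fixes a b :: "real^2"
  assumes "z \<in> closed_segment (a + s *\<^sub>R b) (a + t *\<^sub>R b)" "s \<le> t"
  obtains \<tau> where "s \<le> \<tau>" "\<tau> \<le> t" "z = a + \<tau> *\<^sub>R b"
proof -
  obtain u where u: "0 \<le> u" "u \<le> 1" "z = (1 - u) *\<^sub>R (a + s *\<^sub>R b) + u *\<^sub>R (a + t *\<^sub>R b)"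
    using assms(1) unfolding closed_segment_def by blast
  define \<tau> where "\<tau> = (1 - u) * s + u * t"
  have "z = a + \<tau> *\<^sub>R b" unfolding u(3) \<tau>_def by (simp add: algebra_simps)
  moreover have "\<tau> - s = u * (t - s)" "t - \<tau> = (1 - u) * (t - s)" unfolding \<tau>_def by (simp_all add: algebra_simps)
  then have "s \<le> \<tau>" "\<tau> \<le> t" using u(1,2) assms(2)
    by (metis diff_ge_0_iff_ge mult_nonneg_nonneg)+
  ultimately show ?thesis using that by blast
qed

context AD begin

lemma seg_chain:
  assumes U: "(U, phi) \<in> A" and pq: "p \<in> U" "q \<in> U"
    and seg: "closed_segment (phi p) (phi q) \<subseteq> phi ` U"
  shows "\<exists>ps cs. flat_chain A (f p) (f q) ps cs \<and> chain_length ps cs = norm (D *v (phi q - phi p))"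
proof -
  define \<Delta> where "\<Delta> = phi q - phi p"
  define \<sigma> where "\<sigma> = (\<lambda>\<tau>::real. inv_into U phi (phi p + \<tau> *\<^sub>R \<Delta>))"
  have inseg: "phi p + \<tau> *\<^sub>R \<Delta> \<in> phi ` U" if "\<tau> \<in> {0..1}" for \<tau>
  proof -
    have "phi p + \<tau> *\<^sub>R \<Delta> = (1 - \<tau>) *\<^sub>R phi p + \<tau> *\<^sub>R phi q"
      unfolding \<Delta>_def by (simp add: algebra_simps)
    then have "phi p + \<tau> *\<^sub>R \<Delta> \<in> closed_segment (phi p) (phi q)"
      using that unfolding closed_segment_def by auto
    then show ?thesis using seg by auto
  qed
  have \<sigma>U: "\<sigma> \<tau> \<in> U" if "\<tau> \<in> {0..1}" for \<tau>
    unfolding \<sigma>_def using inseg[OF that] by (simp add: inv_into_into)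
  have phi\<sigma>: "phi (\<sigma> \<tau>) = phi p + \<tau> *\<^sub>R \<Delta>" if "\<tau> \<in> {0..1}" for \<tau>
    unfolding \<sigma>_def using inseg[OF that] by (simp add: f_inv_into_f)
  have \<sigma>0: "\<sigma> 0 = p" unfolding \<sigma>_def using pq chart(3)[OF U] by (simp add: inv_into_f_f)
  have \<sigma>1: "\<sigma> 1 = q" unfolding \<sigma>_def \<Delta>_def using pq chart(3)[OF U] by (simp add: inv_into_f_f)
  have cont\<sigma>: "continuous_on {0..1} \<sigma>"
    unfolding \<sigma>_def
    by (rule continuous_on_compose2[OF chart(6)[OF U]]) (auto intro!: continuous_intros inseg)
  define Good where "Good B \<longleftrightarrow> (\<exists>V psi c. (V, psi) \<in> A \<and>
      (\<forall>\<tau> \<in> B \<inter> {0..1}. f (\<sigma> \<tau>) \<in> V \<and> psi (f (\<sigma> \<tau>)) = D *v (phi p + \<tau> *\<^sub>R \<Delta>) + c))" for B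
  define G where "G = {B. open B \<and> Good B}"
  have cov: "{0..1} \<subseteq> \<Union>G"
  proof
    fix \<tau> :: real assume \<tau>: "\<tau> \<in> {0..1}"
    have X1: "\<sigma> \<tau> \<in> - Sig" using \<sigma>U[OF \<tau>] chart(2)[OF U] by auto
    obtain V psi where V: "(V, psi) \<in> A" "f (\<sigma> \<tau>) \<in> V" using cover[OF fX[OF X1]] by metis
    obtain W where W: "open W" "\<sigma> \<tau> \<in> W" "W \<subseteq> U" "f ` W \<subseteq> V"
      "\<And>x. x \<in> W \<Longrightarrow> psi (f x) = D *v phi x + (psi (f (\<sigma> \<tau>)) - D *v phi (\<sigma> \<tau>))"
      using loc[OF X1 U V(1) \<sigma>U[OF \<tau>] V(2)] by metis
    obtain e where e: "e > 0" "ball (\<sigma> \<tau>) e \<subseteq> W" using W(1,2) open_contains_ball by blast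
    obtain r where r: "r > 0" "\<And>\<tau>'. \<tau>' \<in> {0..1} \<Longrightarrow> dist \<tau>' \<tau> < r \<Longrightarrow> dist (\<sigma> \<tau>') (\<sigma> \<tau>) < e"
      using cont\<sigma> \<tau> e(1) unfolding continuous_on_iff by metis
    have "Good (ball \<tau> r)"
      unfolding Good_def
    proof (intro exI conjI ballI)
      show "(V, psi) \<in> A" by fact
      fix \<tau>' assume "\<tau>' \<in> ball \<tau> r \<inter> {0..1}"
      then have t': "\<tau>' \<in> {0..1}" "dist \<tau>' \<tau> < r" by (auto simp: dist_commute)
      then have "\<sigma> \<tau>' \<in> W" using r(2) e(2) by (auto simp: dist_commute)
      then show "f (\<sigma> \<tau>') \<in> V" "psi (f (\<sigma> \<tau>')) =
          D *v (phi p + \<tau>' *\<^sub>R \<Delta>) + (psi (f (\<sigma> \<tau>)) - D *v phi (\<sigma> \<tau>))"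
        using W(4,5) phi\<sigma>[OF t'(1)] by auto
    qed
    then show "\<tau> \<in> \<Union>G" unfolding G_def using r(1) by auto
  qed
  obtain \<epsilon> where \<epsilon>: "\<epsilon> > 0" "\<And>x. x \<in> {0..1} \<Longrightarrow> \<exists>B \<in> G. ball x \<epsilon> \<subseteq> B"
    using Heine_Borel_lemma[OF compact_Icc cov] unfolding G_def by blast
  obtain N :: nat where N: "1 / \<epsilon> < N" using reals_Archimedean2 by blast
  have Npos: "N > 0" using N \<epsilon>(1) by (metis of_nat_0_less_iff order_less_trans zero_less_divide_1_iff)
  have small: "1 / real N < \<epsilon>" using N \<epsilon>(1) Npos by (simp add: field_simps)
  have "\<forall>i \<in> {..<N}. \<exists>ch. fst ch \<in> A \<and> (\<forall>\<tau> \<in> {real i / N..real (Suc i) / N}.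
      f (\<sigma> \<tau>) \<in> fst (fst ch) \<and> snd (fst ch) (f (\<sigma> \<tau>)) = D *v (phi p + \<tau> *\<^sub>R \<Delta>) + snd ch)"
  proof
    fix i assume "i \<in> {..<N}"
    then have i: "i < N" by simp
    have iin: "real i / N \<in> {0..1}" using i by simp
    obtain B where B: "B \<in> G" "ball (real i / N) \<epsilon> \<subseteq> B" using \<epsilon>(2)[OF iin] by blast
    obtain V psi c where V: "(V, psi) \<in> A" "\<forall>\<tau> \<in> B \<inter> {0..1}. f (\<sigma> \<tau>) \<in> V \<and>
        psi (f (\<sigma> \<tau>)) = D *v (phi p + \<tau> *\<^sub>R \<Delta>) + c"
      using B(1) unfolding G_def Good_def by blast
    have sub: "{real i / N..real (Suc i) / N} \<subseteq> B \<inter> {0..1}"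
    proof
      fix \<tau> assume t: "\<tau> \<in> {real i / N..real (Suc i) / N}"
      have "real (Suc i) / N \<le> 1" using i by simp
      moreover have "0 \<le> real i / N" by simp
      then have "0 \<le> \<tau>" using t by (meson atLeastAtMost_iff order_trans)
      moreover have "dist \<tau> (real i / N) \<le> 1 / N"
        using t by (auto simp: dist_real_def add_divide_distrib)
      ultimately show "\<tau> \<in> B \<inter> {0..1}" using t B(2) small by (auto simp: dist_commute)
    qed
    show "\<exists>ch. fst ch \<in> A \<and> (\<forall>\<tau> \<in> {real i / N..real (Suc i) / N}.
      f (\<sigma> \<tau>) \<in> fst (fst ch) \<and> snd (fst ch) (f (\<sigma> \<tau>)) = D *v (phi p + \<tau> *\<^sub>R \<Delta>) + snd ch)"
    proof (rule exI[of _ "((V, psi), c)"], unfold fst_conv snd_conv, rule conjI[OF V(1)], rule ballI)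
      fix \<tau> assume "\<tau> \<in> {real i / N..real (Suc i) / N}"
      then have "\<tau> \<in> B \<inter> {0..1}" using sub by blast
      then show "f (\<sigma> \<tau>) \<in> V \<and> psi (f (\<sigma> \<tau>)) = D *v (phi p + \<tau> *\<^sub>R \<Delta>) + c"
        using V(2) by blast
    qed
  qed
  then obtain ch where ch: "\<And>i. i < N \<Longrightarrow> fst (ch i) \<in> A"
    "\<And>i \<tau>. i < N \<Longrightarrow> \<tau> \<in> {real i / N..real (Suc i) / N} \<Longrightarrow>
      f (\<sigma> \<tau>) \<in> fst (fst (ch i)) \<and> snd (fst (ch i)) (f (\<sigma> \<tau>)) = D *v (phi p + \<tau> *\<^sub>R \<Delta>) + snd (ch i)"
    by (metis (no_types, lifting) bchoice lessThan_iff)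
  define ps where "ps = map (\<lambda>i. f (\<sigma> (real i / N))) [0..<Suc N]"
  define cs where "cs = map (\<lambda>i. fst (ch i)) [0..<N]"
  have lcs: "length cs = N" "length ps = Suc N" unfolding ps_def cs_def by simp_all
  have psi: "ps ! i = f (\<sigma> (real i / N))" if "i \<le> N" for i
    unfolding ps_def using that by (simp del: upt_Suc add: nth_map_upt)
  have csi: "cs ! i = fst (ch i)" if "i < N" for i
    unfolding cs_def using that by simp
  have lin: "snd (cs ! i) (ps ! j) = (D *v phi p + snd (ch i)) + (real j / N) *\<^sub>R (D *v \<Delta>)"
    if "i < N" "j = i \<or> j = Suc i" for i j
  proof -
    have "real j / N \<in> {real i / N..real (Suc i) / N}" using that by (auto simp: divide_right_mono)
    then show ?thesis using ch(2)[OF that(1)] psi[of j] that csi[OF that(1)]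
      by (auto simp: matrix_vector_right_distrib matrix_vector_mult_scaleR algebra_simps)
  qed
  have fc: "flat_chain A (f p) (f q) ps cs"
    unfolding flat_chain_def
  proof (intro conjI)
    show "ps \<noteq> []" using lcs by auto
    show "hd ps = f p"
    proof -
      have "ps \<noteq> []" using lcs by auto
      then have "hd ps = ps ! 0" by (rule hd_conv_nth)
      then show ?thesis using psi[of 0] \<sigma>0 by simp
    qed
    show "last ps = f q"
    proof -
      have "ps \<noteq> []" using lcs by auto
      then have "last ps = ps ! N" using lcs by (simp add: last_conv_nth)
      then show ?thesis using psi[of N] \<sigma>1 Npos by simp
    qed
    show "length cs = length ps - 1" using lcs by simp
    show "\<forall>i<length cs. cs ! i \<in> A \<and> ps ! i \<in> fst (cs ! i) \<and> ps ! Suc i \<in> fst (cs ! i) \<and>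
        closed_segment (snd (cs ! i) (ps ! i)) (snd (cs ! i) (ps ! Suc i))
          \<subseteq> snd (cs ! i) ` fst (cs ! i)"
    proof (intro allI impI)
      fix i assume "i < length cs"
      then have i: "i < N" using lcs by simp
      have m1: "ps ! i \<in> fst (cs ! i)"
        using ch(2)[OF i, of "real i / N"] psi[of i] csi[OF i] i by (simp add: divide_right_mono)
      have m2: "ps ! Suc i \<in> fst (cs ! i)"
        using ch(2)[OF i, of "real (Suc i) / N"] psi[of "Suc i"] csi[OF i] i by (simp add: divide_right_mono)
      have m3: "closed_segment (snd (cs ! i) (ps ! i)) (snd (cs ! i) (ps ! Suc i))
          \<subseteq> snd (cs ! i) ` fst (cs ! i)"
      proof
        fix z assume "z \<in> closed_segment (snd (cs ! i) (ps ! i)) (snd (cs ! i) (ps ! Suc i))"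
        then have "z \<in> closed_segment ((D *v phi p + snd (ch i)) + (real i / N) *\<^sub>R (D *v \<Delta>))
            ((D *v phi p + snd (ch i)) + (real (Suc i) / N) *\<^sub>R (D *v \<Delta>))"
          using lin[OF i] by simp
        then obtain \<tau> where t: "real i / N \<le> \<tau>" "\<tau> \<le> real (Suc i) / N"
          "z = (D *v phi p + snd (ch i)) + \<tau> *\<^sub>R (D *v \<Delta>)"
          using seg_affine[of z] by (metis divide_right_mono of_nat_0_le_iff of_nat_le_iff le_SucI order_refl)
        then have "f (\<sigma> \<tau>) \<in> fst (fst (ch i))" "snd (fst (ch i)) (f (\<sigma> \<tau>)) = z"
          using ch(2)[OF i, of \<tau>]
          by (auto simp: matrix_vector_right_distrib matrix_vector_mult_scaleR algebra_simps)
        then show "z \<in> snd (cs ! i) ` fst (cs ! i)" using csi[OF i] by force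
      qed
      show "cs ! i \<in> A \<and> ps ! i \<in> fst (cs ! i) \<and> ps ! Suc i \<in> fst (cs ! i) \<and>
        closed_segment (snd (cs ! i) (ps ! i)) (snd (cs ! i) (ps ! Suc i))
          \<subseteq> snd (cs ! i) ` fst (cs ! i)" using m1 m2 m3 ch(1)[OF i] csi[OF i] by simp
    qed
  qed
  have "chain_length ps cs = (\<Sum>i<N. norm ((1 / real N) *\<^sub>R (D *v \<Delta>)))"
    unfolding chain_length_def lcs
  proof (rule sum.cong[OF refl])
    fix i assume "i \<in> {..<N}"
    then have i: "i < N" by simp
    have "snd (cs ! i) (ps ! Suc i) - snd (cs ! i) (ps ! i) =
        (real (Suc i) / N - real i / N) *\<^sub>R (D *v \<Delta>)"
      using lin[OF i, of i] lin[OF i, of "Suc i"] by (simp add: scaleR_diff_left)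
    also have "real (Suc i) / N - real i / N = 1 / real N" by (simp add: diff_divide_distrib[symmetric])
    finally show "norm (snd (cs ! i) (ps ! Suc i) - snd (cs ! i) (ps ! i)) =
        norm ((1 / real N) *\<^sub>R (D *v \<Delta>))" by simp
  qed
  also have "\<dots> = norm (D *v \<Delta>)" using Npos by simp
  finally show ?thesis using fc unfolding \<Delta>_def by blast
qed


lemma normD: "norm (D *v z) \<le> onorm ((*v) D) * norm z"
  by (rule onorm) simp

lemma onormD_nonneg: "onorm ((*v) D) \<ge> 0"
  by (rule onorm_pos_le) simp

lemma chain_transfer:
  assumes "flat_chain A x y ps cs"
  shows "\<exists>ps' cs'. flat_chain A (f x) (f y) ps' cs' \<and>
           chain_length ps' cs' \<le> onorm ((*v) D) * chain_length ps cs"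
  using assms
proof (induction cs arbitrary: x ps)
  case Nil
  then have "x = y" by (simp add: flat_chain_Nil)
  then have "flat_chain A (f x) (f y) [f x] []" by (simp add: flat_chain_Nil)
  then show ?case
    by (intro exI[of _ "[f x]"] exI[of _ "[]"]) (simp add: chain_length_Nil)
next
  case (Cons c cs)
  from Cons.prems obtain p ps' where h: "ps = x # p # ps'" "c \<in> A" "x \<in> fst c" "p \<in> fst c"
     "closed_segment (snd c x) (snd c p) \<subseteq> snd c ` fst c" "flat_chain A p y (p # ps') cs"
    unfolding flat_chain_Cons by blast
  obtain U phi where c: "c = (U, phi)" by (cases c)
  obtain qs ds where 1: "flat_chain A (f x) (f p) qs ds" "chain_length qs ds = norm (D *v (phi p - phi x))"
    using seg_chain[of U phi x p] h c by auto
  obtain qs' ds' where 2: "flat_chain A (f p) (f y) qs' ds'"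
    "chain_length qs' ds' \<le> onorm ((*v) D) * chain_length (p # ps') cs"
    using Cons.IH[OF h(6)] by blast
  have 3: "flat_chain A (f x) (f y) (qs @ tl qs') (ds @ ds')"
    "chain_length (qs @ tl qs') (ds @ ds') = chain_length qs ds + chain_length qs' ds'"
    using chain_concat[OF 1(1) 2(1)] by auto
  have "chain_length (qs @ tl qs') (ds @ ds') \<le> onorm ((*v) D) * norm (phi p - phi x)
       + onorm ((*v) D) * chain_length (p # ps') cs"
    using 3(2) 1(2) 2(2) normD[of "phi p - phi x"] by simp
  also have "\<dots> = onorm ((*v) D) * chain_length ps (c # cs)"
    unfolding h(1) c chain_length_Cons by (simp add: algebra_simps)
  finally show ?case using 3(1) by blast
qed

lemma chain_set_nonneg: "\<forall>l \<in> {chain_length ps cs | ps cs. flat_chain A x y ps cs}. 0 \<le> l"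
  using chain_length_nonneg by blast

lemma lip_aux:
  assumes x: "x \<in> - Sig" and y: "y \<in> - Sig"
    and ne: "{chain_length ps cs | ps cs. flat_chain A x y ps cs} \<noteq> {}"
  shows "dist (f x) (f y) \<le> max 1 (onorm ((*v) D)) * dist x y"
proof -
  let ?S = "{chain_length ps cs | ps cs. flat_chain A x y ps cs}"
  let ?Sf = "{chain_length ps cs | ps cs. flat_chain A (f x) (f y) ps cs}"
  let ?K = "max 1 (onorm ((*v) D))"
  have Kpos: "?K > 0" by simp
  have bdd: "bdd_below ?Sf" using chain_set_nonneg unfolding bdd_below_def by blast
  have "Inf ?Sf / ?K \<le> l" if lS: "l \<in> ?S" for l
  proof -
    obtain ps cs where l: "l = chain_length ps cs" "flat_chain A x y ps cs" using lS by blast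
    obtain ps' cs' where c: "flat_chain A (f x) (f y) ps' cs'"
      "chain_length ps' cs' \<le> onorm ((*v) D) * chain_length ps cs"
      using chain_transfer[OF l(2)] by blast
    have "Inf ?Sf \<le> chain_length ps' cs'" using c(1) bdd by (auto intro!: cInf_lower)
    also have "\<dots> \<le> ?K * l"
    proof -
      have "onorm ((*v) D) * chain_length ps cs \<le> ?K * chain_length ps cs"
        using chain_length_nonneg[of ps cs] by (intro mult_right_mono) auto
      then show ?thesis unfolding l(1) using c(2) by (rule order_trans[rotated])
    qed
    finally show ?thesis using Kpos by (simp add: divide_le_eq mult.commute)
  qed
  then have "Inf ?Sf / ?K \<le> Inf ?S" using ne by (intro cInf_greatest) auto
  then have "Inf ?Sf \<le> ?K * Inf ?S" using Kpos by (simp add: divide_le_eq mult.commute)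
  then show ?thesis using dist_eq[OF x y] dist_eq[OF fX[OF x] fX[OF y]] by simp
qed

lemma lip:
  "\<exists>K>0. \<forall>x \<in> - Sig. \<forall>y \<in> - Sig. dist (f x) (f y) \<le> K * dist x y"
proof -
  obtain Di where Di: "Di ** D = mat 1" using D_inv by metis
  interpret I: AD Sig A g Di by unfold_locales (rule inv_affine[OF Di])
  let ?K = "max 1 (onorm ((*v) D))"
  have "dist (f x) (f y) \<le> ?K * dist x y" if x: "x \<in> - Sig" and y: "y \<in> - Sig" for x y
  proof (cases "{chain_length ps cs | ps cs. flat_chain A x y ps cs} = {}")
    case False
    then show ?thesis using lip_aux[OF x y] by blast
  next
    case True
    have "{chain_length ps cs | ps cs. flat_chain A (f x) (f y) ps cs} = {}"
    proof (rule ccontr)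
      assume "{chain_length ps cs | ps cs. flat_chain A (f x) (f y) ps cs} \<noteq> {}"
      then obtain ps cs where "flat_chain A (f x) (f y) ps cs" by blast
      from I.chain_transfer[OF this] obtain ps' cs' where "flat_chain A (g (f x)) (g (f y)) ps' cs'"
        by blast
      then have "flat_chain A x y ps' cs'" using g_f x y by simp
      then show False using True by blast
    qed
    then have "dist (f x) (f y) = dist x y"
      using dist_eq[OF x y] dist_eq[OF fX[OF x] fX[OF y]] True by simp
    also have "\<dots> \<le> ?K * dist x y" by (simp add: mult_le_cancel_right1)
    finally show ?thesis .
  qed
  then show ?thesis by (intro exI[of _ ?K]) auto
qed

end

lemma lip_extend:
  fixes f :: "'a::metric_space \<Rightarrow> 'a" and X :: "'a set"
  assumes cpl: "complete (UNIV::'a set)" and dense: "closure X = UNIV" and K: "K > 0"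
    and L: "\<And>x y. x \<in> X \<Longrightarrow> y \<in> X \<Longrightarrow> dist (f x) (f y) \<le> K * dist x y"
  obtains G where "continuous_on UNIV G" "\<And>x. x \<in> X \<Longrightarrow> G x = f x"
proof -
  have conv: "\<exists>l. (\<lambda>n. f (xs n)) \<longlonglongrightarrow> l" if xs: "\<And>n. xs n \<in> X" "xs \<longlonglongrightarrow> x" for xs x
  proof -
    have "Cauchy xs" using xs(2) by (rule LIMSEQ_imp_Cauchy)
    have "Cauchy (\<lambda>n. f (xs n))"
      unfolding Cauchy_def
    proof (intro allI impI)
      fix e :: real assume e: "e > 0"
      then obtain M where M: "\<forall>m\<ge>M. \<forall>n\<ge>M. dist (xs m) (xs n) < e / K"
        using \<open>Cauchy xs\<close> K unfolding Cauchy_def by (meson divide_pos_pos)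
      show "\<exists>M. \<forall>m\<ge>M. \<forall>n\<ge>M. dist (f (xs m)) (f (xs n)) < e"
      proof (intro exI allI impI)
        fix m n assume "M \<le> m" "M \<le> n"
        then have "dist (xs m) (xs n) < e / K" using M by blast
        then have "K * dist (xs m) (xs n) < e" using K by (simp add: field_simps)
        then show "dist (f (xs m)) (f (xs n)) < e" using L[OF xs(1) xs(1)] by (meson le_less_trans)
      qed
    qed
    then show ?thesis using cpl unfolding complete_def by blast
  qed
  have indep: "l1 = l2" if "\<And>n. xs n \<in> X" "xs \<longlonglongrightarrow> x" "(\<lambda>n. f (xs n)) \<longlonglongrightarrow> l1"
    "\<And>n. ys n \<in> X" "ys \<longlonglongrightarrow> x" "(\<lambda>n. f (ys n)) \<longlonglongrightarrow> l2" for xs ys x l1 l2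
  proof -
    have DL: "(\<lambda>n. dist (f (xs n)) (f (ys n))) \<longlonglongrightarrow> dist l1 l2"
      using that(3,6) by (rule tendsto_dist)
    have KL: "(\<lambda>n. K * dist (xs n) (ys n)) \<longlonglongrightarrow> K * dist x x"
      using that(2,5) by (intro tendsto_mult_left tendsto_dist)
    have ev: "eventually (\<lambda>n. dist (f (xs n)) (f (ys n)) \<le> K * dist (xs n) (ys n)) sequentially"
      by (intro always_eventually allI L that(1,4))
    have "dist l1 l2 \<le> K * dist x x" using tendsto_le[OF trivial_limit_sequentially KL DL ev] .
    then show ?thesis by simp
  qed
  have ex_seq: "\<exists>xs. (\<forall>n. xs n \<in> X) \<and> xs \<longlonglongrightarrow> x" for x
    using dense closure_sequential by blast
  define S where "S x = (SOME xs. (\<forall>n. xs n \<in> X) \<and> xs \<longlonglongrightarrow> x)" for x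
  have S: "\<forall>n. S x n \<in> X" "S x \<longlonglongrightarrow> x" for x
    using someI_ex[OF ex_seq[of x]] unfolding S_def by auto
  define G where "G x = lim (\<lambda>n. f (S x n))" for x
  have P: "(\<lambda>n. f (ys n)) \<longlonglongrightarrow> G x" if ys: "\<And>n. ys n \<in> X" "ys \<longlonglongrightarrow> x" for ys x
  proof -
    obtain l where l: "(\<lambda>n. f (S x n)) \<longlonglongrightarrow> l" using conv[of "S x" x] S by blast
    then have "G x = l" unfolding G_def by (rule limI)
    moreover obtain l' where l': "(\<lambda>n. f (ys n)) \<longlonglongrightarrow> l'" using conv[OF ys] by blast
    moreover have "l = l'" using indep[of "S x" x l ys l'] S l l' ys by blast
    ultimately show ?thesis by simp
  qed
  have GX: "G x = f x" if "x \<in> X" for x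
  proof -
    have "(\<lambda>n. f ((\<lambda>n. x) n)) \<longlonglongrightarrow> G x" using P[of "\<lambda>n. x" x] that by simp
    then show ?thesis by (simp add: LIMSEQ_const_iff)
  qed
  have "K-lipschitz_on UNIV G"
  proof (rule lipschitz_onI)
    fix x y :: 'a
    have DL: "(\<lambda>n. dist (f (S x n)) (f (S y n))) \<longlonglongrightarrow> dist (G x) (G y)"
      using P[OF _ S(2), of x] P[OF _ S(2), of y] S(1) by (intro tendsto_dist) auto
    have KL: "(\<lambda>n. K * dist (S x n) (S y n)) \<longlonglongrightarrow> K * dist x y"
      using S(2)[of x] S(2)[of y] by (intro tendsto_mult_left tendsto_dist)
    have ev: "eventually (\<lambda>n. dist (f (S x n)) (f (S y n)) \<le> K * dist (S x n) (S y n)) sequentially"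
      using S(1) by (intro always_eventually allI L) auto
    show "dist (G x) (G y) \<le> K * dist x y" using tendsto_le[OF trivial_limit_sequentially KL DL ev] .
    show "0 \<le> K" using K by simp
  qed
  then have "continuous_on UNIV G" by (rule lipschitz_on_continuous_on)
  then show ?thesis using that GX by blast
qed

lemma dense_eq:
  fixes p q :: "'a::metric_space \<Rightarrow> 'b::metric_space"
  assumes "closure X = UNIV" "continuous_on UNIV p" "continuous_on UNIV q" "\<And>x. x \<in> X \<Longrightarrow> p x = q x"
  shows "p x = q x"
proof -
  obtain xs where xs: "\<forall>n. xs n \<in> X" "xs \<longlonglongrightarrow> x" using assms(1) closure_sequential by blast
  have "(\<lambda>n. p (xs n)) \<longlonglongrightarrow> p x"
  proof -
    have "isCont p x" using assms(2) by (simp add: continuous_on_eq_continuous_at)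
    then show ?thesis using isCont_tendsto_compose xs(2) by blast
  qed
  moreover have "(\<lambda>n. q (xs n)) \<longlonglongrightarrow> q x"
  proof -
    have "isCont q x" using assms(3) by (simp add: continuous_on_eq_continuous_at)
    then show ?thesis using isCont_tendsto_compose xs(2) by blast
  qed
  moreover have "(\<lambda>n. p (xs n)) = (\<lambda>n. q (xs n))" using xs(1) assms(4) by auto
  ultimately show ?thesis using LIMSEQ_unique by metis
qed

context AD begin

lemma D_inj_on: "inj_on ((*v) D) S"
  unfolding inj_on_def
proof (intro ballI impI)
  fix x y assume "D *v x = D *v y"
  then have "D *v (x - y) = 0" by (simp add: matrix_vector_mult_diff_distrib)
  then have "x - y = 0" by (rule D_inj)
  then show "x = y" by simp
qed

lemma homeo_ext:
  obtains G H where "continuous_on UNIV G" "continuous_on UNIV H" "\<And>x. x \<in> - Sig \<Longrightarrow> G x = f x"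
    "\<And>x. H (G x) = x" "\<And>y. G (H y) = y" "\<And>x. G x \<in> Sig \<longleftrightarrow> x \<in> Sig"
proof -
  obtain K where K: "K > 0" "\<forall>x \<in> - Sig. \<forall>y \<in> - Sig. dist (f x) (f y) \<le> K * dist x y"
    using lip by blast
  obtain G where G: "continuous_on UNIV G" "\<And>x. x \<in> - Sig \<Longrightarrow> G x = f x"
    using lip_extend[OF completeU denseX K(1)] K(2) by metis
  obtain Di where Di: "Di ** D = mat 1" using D_inv by metis
  interpret I: AD Sig A g Di by unfold_locales (rule inv_affine[OF Di])
  obtain K' where K': "K' > 0" "\<forall>x \<in> - Sig. \<forall>y \<in> - Sig. dist (g x) (g y) \<le> K' * dist x y"
    using I.lip by blast
  obtain H where H: "continuous_on UNIV H" "\<And>x. x \<in> - Sig \<Longrightarrow> H x = g x"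
    using lip_extend[OF completeU denseX K'(1)] K'(2) by metis
  have cHG: "continuous_on UNIV (H \<circ> G)"
    by (rule continuous_on_compose[OF G(1) continuous_on_subset[OF H(1)]]) simp
  have cGH: "continuous_on UNIV (G \<circ> H)"
    by (rule continuous_on_compose[OF H(1) continuous_on_subset[OF G(1)]]) simp
  have HG: "H (G x) = x" for x
    using dense_eq[OF denseX cHG continuous_on_id, of x] G(2) H(2) fX g_f by simp
  have GH: "G (H x) = x" for x
    using dense_eq[OF denseX cGH continuous_on_id, of x] G(2) H(2) gX f_g by simp
  have S: "G x \<in> Sig \<longleftrightarrow> x \<in> Sig" for x
  proof
    assume "G x \<in> Sig"
    then show "x \<in> Sig" using G(2) fX by force
  next
    assume x: "x \<in> Sig"
    show "G x \<in> Sig"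
    proof (rule ccontr)
      assume "G x \<notin> Sig"
      then have "H (G x) \<in> - Sig" using H(2) gX by simp
      then show False using HG x by simp
    qed
  qed
  show ?thesis by (rule that[OF G(1) H(1) G(2) HG GH S])
qed

end

locale HM = AD +
  fixes G H :: "'a \<Rightarrow> 'a"
  assumes contG: "continuous_on UNIV G" and contH: "continuous_on UNIV H"
    and GX: "\<And>x. x \<in> - Sig \<Longrightarrow> G x = f x" and HG: "\<And>x. H (G x) = x" and GH: "\<And>y. G (H y) = y"
    and GS: "\<And>x. G x \<in> Sig \<longleftrightarrow> x \<in> Sig"
begin

lemma hm: "homeomorphic_map euclidean euclidean G"
  unfolding homeomorphic_map_maps homeomorphic_maps_def
  using contG contH HG GH by auto

lemma injG: "inj G" by (metis HG injI)
lemma surjG: "surj G" by (metis GH surjI)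

lemma img_closure: "closure (G ` S) = G ` closure S"
  using homeomorphic_map_closure_of[OF hm, of S] by simp
lemma img_interior: "interior (G ` S) = G ` interior S"
  using homeomorphic_map_interior_of[OF hm, of S] by simp
lemma img_frontier: "frontier (G ` S) = G ` frontier S"
  using homeomorphic_map_frontier_of[OF hm, of S] by simp
lemma img_closed: "closed S \<Longrightarrow> closed (G ` S)"
  using img_closure[of S] by (metis closure_closed closure_eq)

lemma sc_transfer:
  assumes sc: "saddle_connection Sig A \<gamma> v"
  shows "saddle_connection Sig A (G \<circ> \<gamma>) (D *v v)"
proof -
  have v: "v \<noteq> 0" "continuous_on {0..1} \<gamma>" "\<gamma> 0 \<in> Sig" "\<gamma> 1 \<in> Sig" "\<gamma> ` {0<..<1} \<subseteq> - Sig"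
    using sc unfolding saddle_connection_def by auto
  have loc\<gamma>: "\<forall>t \<in> {0<..<1}. \<forall>(U, phi) \<in> A. \<gamma> t \<in> U \<longrightarrow>
        (\<exists>e>0. \<forall>s. \<bar>s - t\<bar> < e \<longrightarrow>
           \<gamma> s \<in> U \<and> phi (\<gamma> s) = phi (\<gamma> t) + (s - t) *\<^sub>R v)"
    using sc unfolding saddle_connection_def by (elim conjE) assumption
  have Dv: "D *v v \<noteq> 0" using D_inj v(1) by blast
  have cont: "continuous_on {0..1} (G \<circ> \<gamma>)"
    by (rule continuous_on_compose[OF v(2) continuous_on_subset[OF contG]]) simp
  have key: "\<exists>e>0. \<forall>s. \<bar>s - t\<bar> < e \<longrightarrow>
           (G \<circ> \<gamma>) s \<in> U \<and> phi ((G \<circ> \<gamma>) s) = phi ((G \<circ> \<gamma>) t) + (s - t) *\<^sub>R (D *v v)"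
    if t: "t \<in> {0<..<1}" and U: "(U, phi) \<in> A" and inU: "(G \<circ> \<gamma>) t \<in> U" for t :: real and U phi
  proof -
    define p where "p = \<gamma> t"
    have p: "p \<in> - Sig" using v(5) t unfolding p_def by blast
    have Gp: "G p = f p" using GX[OF p] .
    obtain U0 phi0 where U0: "(U0, phi0) \<in> A" "p \<in> U0" using cover[OF p] by metis
    obtain W where W: "open W" "p \<in> W" "W \<subseteq> U0" "f ` W \<subseteq> U"
      "\<And>q. q \<in> W \<Longrightarrow> phi (f q) = D *v phi0 q + (phi (f p) - D *v phi0 p)"
      using loc[OF p U0(1) U U0(2)] inU Gp unfolding p_def by auto
    obtain e1 where e1: "e1 > 0" "\<And>s. \<bar>s - t\<bar> < e1 \<Longrightarrow> \<gamma> s \<in> U0 \<and> phi0 (\<gamma> s) = phi0 p + (s - t) *\<^sub>R v"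
    proof -
      have "\<gamma> t \<in> U0 \<longrightarrow> (\<exists>e>0. \<forall>s. \<bar>s - t\<bar> < e \<longrightarrow>
           \<gamma> s \<in> U0 \<and> phi0 (\<gamma> s) = phi0 (\<gamma> t) + (s - t) *\<^sub>R v)"
        using bspec[OF bspec[OF loc\<gamma> t] U0(1)] by simp
      then have "\<exists>e>0. \<forall>s. \<bar>s - t\<bar> < e \<longrightarrow> \<gamma> s \<in> U0 \<and> phi0 (\<gamma> s) = phi0 p + (s - t) *\<^sub>R v"
        using U0(2) unfolding p_def by blast
      then show ?thesis using that by blast
    qed
    obtain e2 where e2: "e2 > 0" "ball p e2 \<subseteq> W" using W(1,2) open_contains_ball by blast
    have t01: "t \<in> {0..1}" using t by auto
    obtain r where r: "r > 0" "\<And>s. s \<in> {0..1} \<Longrightarrow> dist s t < r \<Longrightarrow> dist (\<gamma> s) (\<gamma> t) < e2"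
      using v(2) t01 e2(1) unfolding continuous_on_iff by metis
    define e where "e = min e1 (min r (min t (1 - t)))"
    have epos: "e > 0" unfolding e_def using e1 r t by auto
    show ?thesis
    proof (intro exI[of _ e] conjI allI impI epos)
      fix s assume s: "\<bar>s - t\<bar> < e"
      then have s01: "s \<in> {0..1}" "dist s t < r" "\<bar>s - t\<bar> < e1" unfolding e_def dist_real_def by auto
      have "\<gamma> s \<in> W" using r(2)[OF s01(1,2)] e2(2) unfolding p_def by (auto simp: dist_commute)
      then have Gs: "G (\<gamma> s) = f (\<gamma> s)" using W(3) chart(2)[OF U0(1)] GX by auto
      show "(G \<circ> \<gamma>) s \<in> U" using \<open>\<gamma> s \<in> W\<close> W(4) Gs by auto
      have "phi (f (\<gamma> s)) = D *v phi0 (\<gamma> s) + (phi (f p) - D *v phi0 p)" using W(5) \<open>\<gamma> s \<in> W\<close> by blast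
      also have "\<dots> = phi (f p) + (s - t) *\<^sub>R (D *v v)"
        using e1(2)[OF s01(3)] by (simp add: matrix_vector_right_distrib matrix_vector_mult_scaleR)
      finally show "phi ((G \<circ> \<gamma>) s) = phi ((G \<circ> \<gamma>) t) + (s - t) *\<^sub>R (D *v v)"
        using Gs Gp unfolding p_def by simp
    qed
  qed
  have loc': "\<forall>t \<in> {0<..<1}. \<forall>(U, phi) \<in> A. (G \<circ> \<gamma>) t \<in> U \<longrightarrow>
        (\<exists>e>0. \<forall>s. \<bar>s - t\<bar> < e \<longrightarrow>
           (G \<circ> \<gamma>) s \<in> U \<and> phi ((G \<circ> \<gamma>) s) = phi ((G \<circ> \<gamma>) t) + (s - t) *\<^sub>R (D *v v))"
  proof (intro ballI)
    fix t :: real and c assume "t \<in> {0<..<1}" "c \<in> A"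
    then show "case c of (U, phi) \<Rightarrow> (G \<circ> \<gamma>) t \<in> U \<longrightarrow>
        (\<exists>e>0. \<forall>s. \<bar>s - t\<bar> < e \<longrightarrow>
           (G \<circ> \<gamma>) s \<in> U \<and> phi ((G \<circ> \<gamma>) s) = phi ((G \<circ> \<gamma>) t) + (s - t) *\<^sub>R (D *v v))"
      using key by (cases c) auto
  qed
  have "(G \<circ> \<gamma>) ` {0<..<1} \<subseteq> - Sig" using v(5) GS by auto
  then show ?thesis unfolding saddle_connection_def using Dv cont v(3,4) GS loc' by simp
qed


lemma img_inj_sub: "G ` S \<subseteq> G ` T \<longleftrightarrow> S \<subseteq> T"
  using injG by (simp add: inj_image_subset_iff)

lemma cyl_transfer:
  assumes cyl: "cylinder Sig A C c"
  shows "cylinder Sig A (G ` C) (D *v c)"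
proof -
  have C1: "closed C" "C = closure (interior C)" using cyl unfolding cylinder_def by auto
  have frC: "frontier C = \<Union>{\<gamma> ` {0..1} | \<gamma> v. saddle_connection Sig A \<gamma> v \<and> \<gamma> ` {0..1} \<subseteq> frontier C}"
    using cyl unfolding cylinder_def by (elim conjE) assumption
  obtain w F where wF: "independent {c, w}" "c \<noteq> w"
        "interior C = {F s t | s t. 0 < t \<and> t < 1}"
        "\<forall>s t. 0 < t \<and> t < 1 \<longrightarrow> F s t \<in> - Sig \<and> F (s + 1) t = F s t"
        "\<forall>s t s' t'. 0 < t \<and> t < 1 \<and> 0 < t' \<and> t' < 1 \<and> F s t = F s' t' \<longrightarrow>
            t = t' \<and> s - s' \<in> \<int>"
        "\<forall>s t. 0 < t \<and> t < 1 \<longrightarrow> (\<forall>(U, phi) \<in> A. F s t \<in> U \<longrightarrow>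
            (\<exists>e>0. \<exists>k. \<forall>s' t'. \<bar>s' - s\<bar> < e \<and> \<bar>t' - t\<bar> < e \<longrightarrow>
               F s' t' \<in> U \<and> phi (F s' t') = s' *\<^sub>R c + t' *\<^sub>R w + k))"
    using cyl unfolding cylinder_def by (elim conjE exE) blast
  define F' where "F' s t = G (F s t)" for s t
  have ind: "independent {D *v c, D *v w}"
    using linear_independent_injective_image[OF matrix_vector_mul_linear wF(1) D_inj_on] by simp
  have ne: "D *v c \<noteq> D *v w" using wF(2) D_inj_on[of UNIV] by (auto dest: injD)
  have int: "interior (G ` C) = {F' s t | s t. 0 < t \<and> t < 1}"
    unfolding img_interior wF(3) F'_def by blast
  have per: "\<forall>s t. 0 < t \<and> t < 1 \<longrightarrow> F' s t \<in> - Sig \<and> F' (s + 1) t = F' s t"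
    using wF(4) GS unfolding F'_def by auto
  have injF: "\<forall>s t s' t'. 0 < t \<and> t < 1 \<and> 0 < t' \<and> t' < 1 \<and> F' s t = F' s' t' \<longrightarrow>
            t = t' \<and> s - s' \<in> \<int>"
    using wF(5) injG unfolding F'_def by (auto dest: injD)
  have key: "\<exists>e>0. \<exists>k. \<forall>s' t'. \<bar>s' - s\<bar> < e \<and> \<bar>t' - t\<bar> < e \<longrightarrow>
               F' s' t' \<in> U \<and> phi (F' s' t') = s' *\<^sub>R (D *v c) + t' *\<^sub>R (D *v w) + k"
    if t: "0 < t" "t < 1" and U: "(U, phi) \<in> A" and inU: "F' s t \<in> U" for s t :: real and U phi
  proof -
    define p where "p = F s t"
    have p: "p \<in> - Sig" using wF(4) t unfolding p_def by blast
    have Gp: "G p = f p" using GX[OF p] .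
    obtain U0 phi0 where U0: "(U0, phi0) \<in> A" "p \<in> U0" using cover[OF p] by metis
    obtain W where W: "open W" "p \<in> W" "W \<subseteq> U0" "f ` W \<subseteq> U"
      "\<And>q. q \<in> W \<Longrightarrow> phi (f q) = D *v phi0 q + (phi (f p) - D *v phi0 p)"
      using loc[OF p U0(1) U U0(2)] inU Gp unfolding p_def F'_def by auto
    obtain e k where ek: "e > 0" "\<And>s' t'. \<bar>s' - s\<bar> < e \<Longrightarrow> \<bar>t' - t\<bar> < e \<Longrightarrow>
               F s' t' \<in> U0 \<and> phi0 (F s' t') = s' *\<^sub>R c + t' *\<^sub>R w + k"
    proof -
      have "\<forall>(U, phi) \<in> A. F s t \<in> U \<longrightarrow>
            (\<exists>e>0. \<exists>k. \<forall>s' t'. \<bar>s' - s\<bar> < e \<and> \<bar>t' - t\<bar> < e \<longrightarrow>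
               F s' t' \<in> U \<and> phi (F s' t') = s' *\<^sub>R c + t' *\<^sub>R w + k)"
        using wF(6) t by blast
      from bspec[OF this U0(1)] have "\<exists>e>0. \<exists>k. \<forall>s' t'. \<bar>s' - s\<bar> < e \<and> \<bar>t' - t\<bar> < e \<longrightarrow>
               F s' t' \<in> U0 \<and> phi0 (F s' t') = s' *\<^sub>R c + t' *\<^sub>R w + k"
        using U0(2) unfolding p_def by simp
      then show ?thesis using that by blast
    qed
    have "open (phi0 ` W)" using open_image[OF U0(1) W(1,3)] .
    moreover have "phi0 p \<in> phi0 ` W" using W(2) by auto
    ultimately obtain r where r: "r > 0" "ball (phi0 p) r \<subseteq> phi0 ` W"
      using open_contains_ball by blast
    define e' where "e' = min e (r / (norm c + norm w + 1))"
    have e'pos: "e' > 0" unfolding e'_def using ek(1) r(1) by (simp add: add_nonneg_pos)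
    have phip: "phi0 p = s *\<^sub>R c + t *\<^sub>R w + k" using ek(2)[of s t] ek(1) unfolding p_def by simp
    show ?thesis
    proof (intro exI[of _ e'] exI[of _ "D *v k + (phi (f p) - D *v phi0 p)"] conjI allI impI e'pos)
      fix s' t' assume st: "\<bar>s' - s\<bar> < e' \<and> \<bar>t' - t\<bar> < e'"
      then have st': "\<bar>s' - s\<bar> < e" "\<bar>t' - t\<bar> < e" unfolding e'_def by auto
      have F0: "F s' t' \<in> U0" "phi0 (F s' t') = s' *\<^sub>R c + t' *\<^sub>R w + k" using ek(2)[OF st'] by auto
      have "norm (phi0 (F s' t') - phi0 p) = norm ((s' - s) *\<^sub>R c + (t' - t) *\<^sub>R w)"
        using F0(2) phip by (simp add: algebra_simps)
      also have "\<dots> \<le> \<bar>s' - s\<bar> * norm c + \<bar>t' - t\<bar> * norm w"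
        by (rule order_trans[OF norm_triangle_ineq]) simp
      also have "\<dots> \<le> e' * norm c + e' * norm w"
        using st by (intro add_mono mult_right_mono) auto
      also have "\<dots> < e' * (norm c + norm w + 1)" using e'pos by (simp add: algebra_simps)
      also have "\<dots> \<le> r"
      proof -
        have "e' \<le> r / (norm c + norm w + 1)" unfolding e'_def by simp
        then show ?thesis by (simp add: le_divide_eq add_nonneg_pos mult.commute)
      qed
      finally have "phi0 (F s' t') \<in> ball (phi0 p) r" by (simp add: dist_norm norm_minus_commute)
      then obtain q where q: "q \<in> W" "phi0 q = phi0 (F s' t')" using r(2) by auto
      have "q = F s' t'" using chart(3)[OF U0(1)] q W(3) F0(1) by (meson inj_onD subsetD)
      then have inW: "F s' t' \<in> W" using q(1) by simp
      have GF: "F' s' t' = f (F s' t')" unfolding F'_def using GX W(3) chart(2)[OF U0(1)] inW by auto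
      show "F' s' t' \<in> U" using GF W(4) inW by auto
      show "phi (F' s' t') = s' *\<^sub>R (D *v c) + t' *\<^sub>R (D *v w) + (D *v k + (phi (f p) - D *v phi0 p))"
        using GF W(5)[OF inW] F0(2)
        by (simp add: matrix_vector_right_distrib matrix_vector_mult_scaleR algebra_simps)
    qed
  qed
  have loc': "\<forall>s t. 0 < t \<and> t < 1 \<longrightarrow> (\<forall>(U, phi) \<in> A. F' s t \<in> U \<longrightarrow>
            (\<exists>e>0. \<exists>k. \<forall>s' t'. \<bar>s' - s\<bar> < e \<and> \<bar>t' - t\<bar> < e \<longrightarrow>
               F' s' t' \<in> U \<and> phi (F' s' t') = s' *\<^sub>R (D *v c) + t' *\<^sub>R (D *v w) + k))"
  proof (intro allI impI ballI)
    fix s t :: real and cc assume "0 < t \<and> t < 1" "cc \<in> A"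
    then show "case cc of (U, phi) \<Rightarrow> F' s t \<in> U \<longrightarrow>
            (\<exists>e>0. \<exists>k. \<forall>s' t'. \<bar>s' - s\<bar> < e \<and> \<bar>t' - t\<bar> < e \<longrightarrow>
               F' s' t' \<in> U \<and> phi (F' s' t') = s' *\<^sub>R (D *v c) + t' *\<^sub>R (D *v w) + k)"
      using key by (cases cc) auto
  qed
  have cl: "closed (G ` C)" using img_closed[OF C1(1)] .
  have ci: "G ` C = closure (interior (G ` C))"
    using C1(2) by (simp add: img_interior img_closure)
  have fr: "frontier (G ` C) = \<Union>{\<gamma> ` {0..1} | \<gamma> v. saddle_connection Sig A \<gamma> v \<and> \<gamma> ` {0..1} \<subseteq> frontier (G ` C)}"
  proof
    show "\<Union>{\<gamma> ` {0..1} | \<gamma> v. saddle_connection Sig A \<gamma> v \<and> \<gamma> ` {0..1} \<subseteq> frontier (G ` C)} \<subseteq> frontier (G ` C)"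
      by blast
    show "frontier (G ` C) \<subseteq> \<Union>{\<gamma> ` {0..1} | \<gamma> v. saddle_connection Sig A \<gamma> v \<and> \<gamma> ` {0..1} \<subseteq> frontier (G ` C)}"
    proof
      fix y assume "y \<in> frontier (G ` C)"
      then obtain x where x: "x \<in> frontier C" "y = G x" unfolding img_frontier by blast
      then obtain \<gamma> v where gv: "saddle_connection Sig A \<gamma> v" "\<gamma> ` {0..1} \<subseteq> frontier C" "x \<in> \<gamma> ` {0..1}"
        using frC by blast
      have "saddle_connection Sig A (G \<circ> \<gamma>) (D *v v)" using sc_transfer[OF gv(1)] .
      moreover have "(G \<circ> \<gamma>) ` {0..1} \<subseteq> frontier (G ` C)"
        using gv(2) unfolding img_frontier image_comp[symmetric] by blast
      moreover have "y \<in> (G \<circ> \<gamma>) ` {0..1}" using gv(3) x(2) by auto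
      ultimately show "y \<in> \<Union>{\<gamma> ` {0..1} | \<gamma> v. saddle_connection Sig A \<gamma> v \<and> \<gamma> ` {0..1} \<subseteq> frontier (G ` C)}"
        by blast
    qed
  qed
  show ?thesis unfolding cylinder_def
    using cl ci fr ind ne int per injF loc' by blast
qed

lemma decomp_transfer:
  assumes dec: "cylinder_decomposition Sig A \<C> d"
  shows "cylinder_decomposition Sig A ((\<lambda>C. G ` C) ` \<C>) (D *v d)"
proof -
  have d: "d \<noteq> 0" "\<forall>C \<in> \<C>. \<exists>c. cylinder Sig A C c \<and> (\<exists>r::real. c = r *\<^sub>R d)"
    "\<forall>C \<in> \<C>. \<forall>C' \<in> \<C>. C \<noteq> C' \<longrightarrow> C \<inter> C' \<subseteq> frontier C \<inter> frontier C'"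
    "closure (\<Union>\<C>) = UNIV"
    using dec unfolding cylinder_decomposition_def by auto
  have "D *v d \<noteq> 0" using d(1) D_inj by blast
  moreover have "\<forall>C \<in> (\<lambda>C. G ` C) ` \<C>. \<exists>c. cylinder Sig A C c \<and> (\<exists>r::real. c = r *\<^sub>R (D *v d))"
  proof
    fix C' assume "C' \<in> (\<lambda>C. G ` C) ` \<C>"
    then obtain C where C: "C \<in> \<C>" "C' = G ` C" by blast
    then obtain c r where cc: "cylinder Sig A C c" "c = r *\<^sub>R d" using d(2) by blast
    have "cylinder Sig A C' (D *v c)" using cyl_transfer[OF cc(1)] C(2) by simp
    moreover have "D *v c = r *\<^sub>R (D *v d)" using cc(2) by (simp add: matrix_vector_mult_scaleR)
    ultimately show "\<exists>c. cylinder Sig A C' c \<and> (\<exists>r::real. c = r *\<^sub>R (D *v d))" by blast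
  qed
  moreover have "\<forall>C \<in> (\<lambda>C. G ` C) ` \<C>. \<forall>C' \<in> (\<lambda>C. G ` C) ` \<C>. C \<noteq> C' \<longrightarrow> C \<inter> C' \<subseteq> frontier C \<inter> frontier C'"
  proof (intro ballI impI)
    fix C1 C2 assume "C1 \<in> (\<lambda>C. G ` C) ` \<C>" "C2 \<in> (\<lambda>C. G ` C) ` \<C>" "C1 \<noteq> C2"
    then obtain B1 B2 where B: "B1 \<in> \<C>" "B2 \<in> \<C>" "C1 = G ` B1" "C2 = G ` B2" "B1 \<noteq> B2" by blast
    then have "B1 \<inter> B2 \<subseteq> frontier B1 \<inter> frontier B2" using d(3) by blast
    then have "G ` (B1 \<inter> B2) \<subseteq> G ` (frontier B1 \<inter> frontier B2)" by blast
    then show "C1 \<inter> C2 \<subseteq> frontier C1 \<inter> frontier C2"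
      unfolding B(3,4) img_frontier using image_Int[OF injG] by metis
  qed
  moreover have "closure (\<Union>((\<lambda>C. G ` C) ` \<C>)) = UNIV"
  proof -
    have "\<Union>((\<lambda>C. G ` C) ` \<C>) = G ` \<Union>\<C>" by blast
    then show ?thesis using d(4) surjG by (simp add: img_closure)
  qed
  ultimately show ?thesis unfolding cylinder_decomposition_def by blast
qed

lemma rigid_transfer:
  assumes rs: "rigid_spine Sig A \<gamma> v"
  shows "rigid_spine Sig A (G \<circ> \<gamma>) (D *v v)"
proof -
  have sc: "saddle_connection Sig A \<gamma> v" using rs unfolding rigid_spine_def by blast
  obtain \<C> d r where h: "cylinder_decomposition Sig A \<C> d" "v = r *\<^sub>R d"
    "\<forall>C \<in> \<C>. \<not> \<gamma> ` {0..1} \<subseteq> C"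
    using rs unfolding rigid_spine_def by blast
  have "cylinder_decomposition Sig A ((\<lambda>C. G ` C) ` \<C>) (D *v d)" using decomp_transfer[OF h(1)] .
  moreover have "D *v v = r *\<^sub>R (D *v d)" using h(2) by (simp add: matrix_vector_mult_scaleR)
  moreover have "(G \<circ> \<gamma>) ` {0..1} \<subseteq> closure (\<Union>((\<lambda>C. G ` C) ` \<C>))"
    using calculation(1) unfolding cylinder_decomposition_def by simp
  moreover have "\<forall>C \<in> (\<lambda>C. G ` C) ` \<C>. \<not> (G \<circ> \<gamma>) ` {0..1} \<subseteq> C"
    using h(3) img_inj_sub unfolding image_comp[symmetric] by auto
  ultimately show ?thesis unfolding rigid_spine_def using sc_transfer[OF sc] by blast
qed

end

lemma veech_preserves:
  assumes "translation_surface Sig A" "affine_diffeo Sig A f D"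
    "v \<in> rigid_spine_holonomies Sig A"
  shows "D *v v \<in> rigid_spine_holonomies Sig A"
proof -
  interpret AD Sig A f D by unfold_locales (fact assms(1), fact assms(2))
  obtain G H where GH: "continuous_on UNIV G" "continuous_on UNIV H" "\<And>x. x \<in> - Sig \<Longrightarrow> G x = f x"
    "\<And>x. H (G x) = x" "\<And>y. G (H y) = y" "\<And>x. G x \<in> Sig \<longleftrightarrow> x \<in> Sig"
    using homeo_ext by metis
  interpret HM Sig A f D G H by unfold_locales (fact GH)+
  obtain \<gamma> where "rigid_spine Sig A \<gamma> v" using assms(3) unfolding rigid_spine_holonomies_def by blast
  then have "rigid_spine Sig A (G \<circ> \<gamma>) (D *v v)" by (rule rigid_transfer)
  then show ?thesis unfolding rigid_spine_holonomies_def by blast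
qed

lemma matvec_norm_bound:
  fixes M :: "real^2^2"
  shows "norm (M *v x) \<le> 4 * norm M * norm x"
proof -
  have "norm (M *v x) \<le> onorm ((*v) M) * norm x"
    by (rule onorm) simp
  also have "onorm ((*v) M) \<le> (\<Sum>i\<in>UNIV. \<Sum>j\<in>UNIV. \<bar>M $ i $ j\<bar>)"
    by (rule onorm_le_matrix_component_sum)
  also have "\<dots> \<le> (\<Sum>i\<in>(UNIV::2 set). \<Sum>j\<in>(UNIV::2 set). norm M)"
    apply (intro sum_mono)
    by (rule order_trans[OF component_le_norm_cart Finite_Cartesian_Product.norm_nth_le])
  also have "\<dots> = 4 * norm M" by simp
  finally show ?thesis by (simp add: mult_right_mono)
qed

lemma mat_zero_on_indep:
  fixes M :: "real^2^2"
  assumes "independent {u, v}" "u \<noteq> v" "M *v u = 0" "M *v v = 0"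
  shows "M = 0"
proof -
  have "(UNIV :: (real^2) set) \<subseteq> span {u, v}"
    apply (rule card_ge_dim_independent)
    using assms by auto
  then have "\<And>x. M *v x = 0"
    using assms(3,4) proof -
    fix x
    have "linear ((*v) M)" by simp
    from linear_eq_0_on_span[OF this _ subsetD[OF \<open>UNIV \<subseteq> _\<close>, of x]] assms(3,4)
    show "M *v x = 0" by auto
  qed
  then show ?thesis
    by (metis matrix_eq matrix_vector_mult_0)
qed

lemma isolated_pt:
  assumes "discrete_set S" "y \<in> S"
  obtains e where "e > 0" "\<And>z. z \<in> S \<Longrightarrow> dist z y < e \<Longrightarrow> z = y"
  using assms unfolding discrete_set_def islimpt_approachable by metis

theorem theorem1p2:
  fixes Sig :: "'a::metric_space set" and A :: "'a chart set"
  assumes "translation_surface Sig A"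
    and "discrete_set (rigid_spine_holonomies Sig A)"
    and "\<exists>u \<in> rigid_spine_holonomies Sig A. \<exists>v \<in> rigid_spine_holonomies Sig A.
           u \<noteq> v \<and> independent {u, v}"
  shows "discrete_subset (veech_group Sig A)"
  unfolding discrete_subset_def
proof
  fix D assume "D \<in> veech_group Sig A"
  then obtain f where f: "affine_diffeo Sig A f D" unfolding veech_group_def by auto
  let ?H = "rigid_spine_holonomies Sig A"
  from assms(3) obtain u v where uv: "u \<in> ?H" "v \<in> ?H" "u \<noteq> v" "independent {u, v}" by blast
  have Hu: "D *v u \<in> ?H" and Hv: "D *v v \<in> ?H"
    using veech_preserves[OF assms(1) f] uv by auto
  obtain e1 where e1: "e1 > 0" "\<And>z. z \<in> ?H \<Longrightarrow> dist z (D *v u) < e1 \<Longrightarrow> z = D *v u"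
    using isolated_pt[OF assms(2) Hu] by metis
  obtain e2 where e2: "e2 > 0" "\<And>z. z \<in> ?H \<Longrightarrow> dist z (D *v v) < e2 \<Longrightarrow> z = D *v v"
    using isolated_pt[OF assms(2) Hv] by metis
  define e where "e = min (e1 / (4 * norm u + 1)) (e2 / (4 * norm v + 1))"
  have epos: "e > 0" unfolding e_def using e1(1) e2(1) by (auto intro!: divide_pos_pos add_nonneg_pos)
  show "\<exists>e>0. \<forall>y\<in>veech_group Sig A. dist y D < e \<longrightarrow> y = D"
  proof (intro exI conjI ballI impI, fact epos)
    fix D' assume "D' \<in> veech_group Sig A" "dist D' D < e"
    then obtain f' where f': "affine_diffeo Sig A f' D'" unfolding veech_group_def by auto
    have close: "dist (D' *v w) (D *v w) < e * (4 * norm w + 1)" for w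
    proof -
      have "dist (D' *v w) (D *v w) = norm ((D' - D) *v w)"
        by (simp add: dist_norm matrix_vector_mult_diff_rdistrib)
      also have "\<dots> \<le> 4 * norm (D' - D) * norm w" by (rule matvec_norm_bound)
      also have "\<dots> \<le> 4 * e * norm w"
        using \<open>dist D' D < e\<close> by (simp add: dist_norm mult_right_mono)
      also have "\<dots> < e * (4 * norm w + 1)" using epos by (simp add: algebra_simps)
      finally show ?thesis .
    qed
    have "e * (4 * norm u + 1) \<le> e1"
      unfolding e_def by (smt (verit) divide_pos_pos e1(1) le_divide_eq min.cobounded1 norm_ge_zero)
    then have a: "D' *v u = D *v u"
      using e1(2)[of "D' *v u"] close[of u] veech_preserves[OF assms(1) f'] uv by auto
    have "e * (4 * norm v + 1) \<le> e2"
      unfolding e_def by (smt (verit) divide_pos_pos e2(1) le_divide_eq min.cobounded2 norm_ge_zero)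
    then have b: "D' *v v = D *v v"
      using e2(2)[of "D' *v v"] close[of v] veech_preserves[OF assms(1) f'] uv by auto
    have "D' - D = 0"
      apply (rule mat_zero_on_indep[OF uv(4) uv(3)])
      using a b by (simp_all add: matrix_vector_mult_diff_rdistrib)
    then show "D' = D" by simp
  qed
qed

end
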